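(* Let $X$ be a real Banach space with a normalized Schauder basis $\mathcal B=(e_n)_{n=1}^\infty$ with biorthogonal functionals $(e_n^* )$, and let $\mathcal E=(\varepsilon_n)_{n=1}^\infty$ be a sequence of nonnegative numbers. Each of the following conditions is sufficient for the brick $K_{\mathcal B,\mathcal E}$ to be solid: (1) $\mathcal B$ is an unconditional basis; (2) $\sum_{n=1}^\infty\varepsilon_n<\infty$.
   Context: The brick is $K_{\mathcal B,\mathcal E}=\{x\in X:\ |e_n^*(x)|\le\varepsilon_n \text{ for all } n\}$. The brick is called solid if for each $x\in K_{\mathcal B,\mathcal E}$ and all scalars $a_1,a_2,\dots$ with $|a_n|\le|e_n^*(x)|$ for all $n$, the series $\sum_{n=1}^\infty a_ne_n$ converges. A basis is unconditional if $\sum_n e_n^*(x)e_n$ converges unconditionally (under every permutation) for every $x\in X$; normalized means $\|e_n\|=1$. *)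

theory Defs
  imports "HOL-Analysis.Analysis"
begin

text \<open>Schauder basis (indexed from 0): every vector has a unique expansion
  as a norm-convergent series in the basis vectors.\<close>
definition schauder_basis :: "(nat \<Rightarrow> 'a::real_normed_vector) \<Rightarrow> bool" where
  "schauder_basis e \<longleftrightarrow> (\<forall>x. \<exists>!c::nat \<Rightarrow> real. (\<lambda>n. \<Sum>i<n. c i *\<^sub>R e i) \<longlonglongrightarrow> x)"

definition coord :: "(nat \<Rightarrow> 'a::real_normed_vector) \<Rightarrow> nat \<Rightarrow> 'a \<Rightarrow> real" where
  "coord e n x = (THE c::nat \<Rightarrow> real. (\<lambda>m. \<Sum>i<m. c i *\<^sub>R e i) \<longlonglongrightarrow> x) n"

definition normalized_basis :: "(nat \<Rightarrow> 'a::real_normed_vector) \<Rightarrow> bool" where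
  "normalized_basis e \<longleftrightarrow> (\<forall>n. norm (e n) = 1)"

definition unconditional_basis :: "(nat \<Rightarrow> 'a::real_normed_vector) \<Rightarrow> bool" where
  "unconditional_basis e \<longleftrightarrow> schauder_basis e \<and>
     (\<forall>x. \<forall>p::nat \<Rightarrow> nat. bij p \<longrightarrow> summable (\<lambda>n. coord e (p n) x *\<^sub>R e (p n)))"

definition brick :: "(nat \<Rightarrow> 'a::real_normed_vector) \<Rightarrow> (nat \<Rightarrow> real) \<Rightarrow> 'a set" where
  "brick e \<epsilon> = {x. \<forall>n. \<bar>coord e n x\<bar> \<le> \<epsilon> n}"

definition solid_brick :: "(nat \<Rightarrow> 'a::real_normed_vector) \<Rightarrow> (nat \<Rightarrow> real) \<Rightarrow> bool" where
  "solid_brick e \<epsilon> \<longleftrightarrow> (\<forall>x\<in>brick e \<epsilon>. \<forall>a::nat \<Rightarrow> real.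
      (\<forall>n. \<bar>a n\<bar> \<le> \<bar>coord e n x\<bar>) \<longrightarrow> summable (\<lambda>n. a n *\<^sub>R e n))"

end

theory Submission
  imports Defs
begin

lemma convex_bound:
  fixes f :: "nat \<Rightarrow> 'a::real_normed_vector"
  assumes "finite S"
  shows "(\<forall>F\<subseteq>S. norm (y + sum f F) \<le> M) \<Longrightarrow> (\<forall>n\<in>S. 0 \<le> t n \<and> t n \<le> 1)
    \<Longrightarrow> norm (y + (\<Sum>n\<in>S. t n *\<^sub>R f n)) \<le> M"
  using assms
proof (induction S arbitrary: y rule: finite_induct)
  case empty
  then show ?case by auto
next
  case (insert a S)
  define z where "z = (\<Sum>n\<in>S. t n *\<^sub>R f n)"
  have h1: "norm (y + z) \<le> M"
    unfolding z_def by (rule insert.IH) (use insert.prems in auto)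
  have h2: "norm ((y + f a) + z) \<le> M"
    unfolding z_def
  proof (rule insert.IH)
    show "\<forall>F\<subseteq>S. norm (y + f a + sum f F) \<le> M"
    proof (intro allI impI)
      fix F assume "F \<subseteq> S"
      hence "finite F" "a \<notin> F" using insert.hyps finite_subset by auto
      hence "sum f (insert a F) = f a + sum f F" by simp
      moreover have "insert a F \<subseteq> insert a S" using \<open>F \<subseteq> S\<close> by auto
      moreover have "norm (y + sum f (insert a F)) \<le> M"
        using insert.prems(1) \<open>insert a F \<subseteq> insert a S\<close> by blast
      ultimately show "norm (y + f a + sum f F) \<le> M"
        by (simp add: add.assoc)
    qed
  qed (use insert.prems in auto)
  have ta: "0 \<le> t a" "t a \<le> 1" using insert.prems by auto
  have s1: "(\<Sum>n\<in>insert a S. t n *\<^sub>R f n) = t a *\<^sub>R f a + z"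
    unfolding z_def using insert.hyps by simp
  have eq: "y + (\<Sum>n\<in>insert a S. t n *\<^sub>R f n) = (1 - t a) *\<^sub>R (y + z) + t a *\<^sub>R ((y + f a) + z)"
    unfolding s1 by (simp add: algebra_simps)
  have "norm ((1 - t a) *\<^sub>R (y + z) + t a *\<^sub>R ((y + f a) + z))
      \<le> norm ((1 - t a) *\<^sub>R (y + z)) + norm (t a *\<^sub>R ((y + f a) + z))"
    by (rule norm_triangle_ineq)
  also have "\<dots> = (1 - t a) * norm (y + z) + t a * norm ((y + f a) + z)"
    using ta by simp
  also have "\<dots> \<le> (1 - t a) * M + t a * M"
    using ta h1 h2 by (intro add_mono mult_left_mono) auto
  also have "\<dots> = M" by (simp add: algebra_simps)
  finally show ?case using eq by simp
qed

lemma mult_bound: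
  fixes f :: "nat \<Rightarrow> 'a::real_normed_vector"
  assumes "finite S" "\<forall>F\<subseteq>S. norm (sum f F) \<le> M" "\<forall>n. \<bar>t n\<bar> \<le> 1"
  shows "norm (\<Sum>n\<in>S. t n *\<^sub>R f n) \<le> 2 * M"
proof -
  define tp where "tp n = max (t n) 0" for n
  define tm where "tm n = max (- t n) 0" for n
  have pm: "t n *\<^sub>R f n = tp n *\<^sub>R f n - tm n *\<^sub>R f n" for n
  proof -
    have "tp n - tm n = t n" by (simp add: tp_def tm_def max_def)
    then show ?thesis by (metis scaleR_diff_left)
  qed
  have eq: "(\<Sum>n\<in>S. t n *\<^sub>R f n) = (\<Sum>n\<in>S. tp n *\<^sub>R f n) - (\<Sum>n\<in>S. tm n *\<^sub>R f n)"
    unfolding pm by (rule sum_subtractf)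
  have pr: "\<forall>F\<subseteq>S. norm (0 + sum f F) \<le> M" using assms(2) by simp
  have "norm (0 + (\<Sum>n\<in>S. tp n *\<^sub>R f n)) \<le> M"
  proof (rule convex_bound[OF assms(1) pr])
    show "\<forall>n\<in>S. 0 \<le> tp n \<and> tp n \<le> 1"
    proof
      fix n have "\<bar>t n\<bar> \<le> 1" using assms(3) by blast
      then show "0 \<le> tp n \<and> tp n \<le> 1" by (simp add: tp_def abs_le_iff)
    qed
  qed
  moreover have "norm (0 + (\<Sum>n\<in>S. tm n *\<^sub>R f n)) \<le> M"
  proof (rule convex_bound[OF assms(1) pr])
    show "\<forall>n\<in>S. 0 \<le> tm n \<and> tm n \<le> 1"
    proof
      fix n have "\<bar>t n\<bar> \<le> 1" using assms(3) by blast
      then show "0 \<le> tm n \<and> tm n \<le> 1" by (simp add: tm_def abs_le_iff)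
    qed
  qed
  moreover have "norm ((\<Sum>n\<in>S. tp n *\<^sub>R f n) - (\<Sum>n\<in>S. tm n *\<^sub>R f n))
     \<le> norm (\<Sum>n\<in>S. tp n *\<^sub>R f n) + norm (\<Sum>n\<in>S. tm n *\<^sub>R f n)"
    by (rule norm_triangle_ineq4)
  ultimately show ?thesis unfolding eq by simp
qed

lemma bounded_mult_summable:
  fixes f :: "nat \<Rightarrow> 'a::banach"
  assumes C: "\<And>e. e > 0 \<Longrightarrow> \<exists>N. \<forall>F. finite F \<and> F \<subseteq> {N..} \<longrightarrow> norm (sum f F) < e"
    and t: "\<forall>n. \<bar>t n\<bar> \<le> 1"
  shows "summable (\<lambda>n. t n *\<^sub>R f n)"
  unfolding summable_Cauchy
proof (intro allI impI)
  fix e :: real assume "e > 0"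
  then obtain N where N: "\<forall>F. finite F \<and> F \<subseteq> {N..} \<longrightarrow> norm (sum f F) < e/3"
    using C[of "e/3"] by auto
  show "\<exists>N. \<forall>m\<ge>N. \<forall>n. norm (\<Sum>i = m..<n. t i *\<^sub>R f i) < e"
  proof (intro exI allI impI)
    fix m n assume "N \<le> m"
    have pr: "\<forall>F\<subseteq>{m..<n}. norm (sum f F) \<le> e/3"
    proof (intro allI impI)
      fix F assume F: "F \<subseteq> {m..<n}"
      then have "finite F" by (meson finite_atLeastLessThan finite_subset)
      moreover have "F \<subseteq> {N..}" using F \<open>N \<le> m\<close> by auto
      ultimately show "norm (sum f F) \<le> e/3" using N less_imp_le by blast
    qed
    have "norm (\<Sum>i = m..<n. t i *\<^sub>R f i) \<le> 2 * (e/3)"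
      by (rule mult_bound[OF finite_atLeastLessThan pr t])
    also have "\<dots> < e" using \<open>e > 0\<close> by simp
    finally show "norm (\<Sum>i = m..<n. t i *\<^sub>R f i) < e" .
  qed
qed

lemma swap_inv:
  assumes "finite A" "finite B" "card A = card B"
  shows "\<exists>\<sigma>. (\<forall>x. \<sigma> (\<sigma> x) = x) \<and> \<sigma> ` A = B \<and> (\<forall>x. x \<notin> A \<union> B \<longrightarrow> \<sigma> x = x)"
proof -
  have "card (A - B) = card (B - A)"
    using assms by (simp add: card_Diff_subset_Int Int_commute)
  then obtain g where g: "bij_betw g (A - B) (B - A)"
    using finite_same_card_bij assms by (meson finite_Diff)
  define h where "h = inv_into (A - B) g"
  have h: "bij_betw h (B - A) (A - B)" unfolding h_def using g by (rule bij_betw_inv_into)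
  have gh: "y \<in> B - A \<Longrightarrow> g (h y) = y" for y
    unfolding h_def using g by (simp add: bij_betw_inv_into_right)
  have hg: "x \<in> A - B \<Longrightarrow> h (g x) = x" for x
    unfolding h_def using g by (simp add: bij_betw_inv_into_left)
  define \<sigma> where "\<sigma> x = (if x \<in> A - B then g x else if x \<in> B - A then h x else x)" for x
  have gi: "x \<in> A - B \<Longrightarrow> g x \<in> B - A" for x using g by (auto simp: bij_betw_def)
  have hi: "y \<in> B - A \<Longrightarrow> h y \<in> A - B" for y using h by (auto simp: bij_betw_def)
  have "\<forall>x. \<sigma> (\<sigma> x) = x"
  proof
    fix x show "\<sigma> (\<sigma> x) = x"
      using gi[of x] hi[of x] gh[of x] hg[of x] unfolding \<sigma>_def by auto
  qed
  moreover have "\<sigma> ` A = B"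
  proof
    show "\<sigma> ` A \<subseteq> B" using gi unfolding \<sigma>_def by auto
    show "B \<subseteq> \<sigma> ` A"
    proof
      fix y assume "y \<in> B"
      show "y \<in> \<sigma> ` A"
      proof (cases "y \<in> A")
        case True then show ?thesis using \<open>y \<in> B\<close> by (force simp: \<sigma>_def)
      next
        case False
        then have "h y \<in> A - B" "\<sigma> (h y) = y" using hi gh \<open>y \<in> B\<close> by (auto simp: \<sigma>_def)
        then show ?thesis by (metis DiffD1 image_eqI)
      qed
    qed
  qed
  moreover have "\<forall>x. x \<notin> A \<union> B \<longrightarrow> \<sigma> x = x" by (auto simp: \<sigma>_def)
  ultimately show ?thesis by blast
qed

lemma perm_cauchy:
  fixes f :: "nat \<Rightarrow> 'a::banach"
  assumes P: "\<And>p. bij p \<Longrightarrow> summable (\<lambda>n. f (p n))" and "e > 0"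
  shows "\<exists>N. \<forall>F. finite F \<and> F \<subseteq> {N..} \<longrightarrow> norm (sum f F) < e"
proof (rule ccontr)
  assume "\<not> ?thesis"
  then have "\<forall>N. \<exists>F. finite F \<and> F \<subseteq> {N..} \<and> e \<le> norm (sum f F)" by (auto simp: not_less)
  then obtain G where G: "\<And>N. finite (G N)" "\<And>N. G N \<subseteq> {N..}" "\<And>N. e \<le> norm (sum f (G N))"
    by metis
  define Nf where "Nf = rec_nat 0 (\<lambda>k v. Max (insert (v + card (G v)) (G v)) + 1)"
  have Nf0: "Nf 0 = 0" by (simp add: Nf_def)
  have NfS: "Nf (Suc k) = Max (insert (Nf k + card (G (Nf k))) (G (Nf k))) + 1" for k
    by (simp add: Nf_def)
  define Fk where "Fk k = G (Nf k)" for k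
  define Ik where "Ik k = {Nf k..<Nf k + card (Fk k)}" for k
  define Bk where "Bk k = {Nf k..<Nf (Suc k)}" for k
  have FB: "Fk k \<subseteq> Bk k" for k
  proof
    fix x assume "x \<in> Fk k"
    then have "x \<le> Max (insert (Nf k + card (G (Nf k))) (G (Nf k)))"
      using G(1) by (auto simp: Fk_def)
    then show "x \<in> Bk k" using G(2) \<open>x \<in> Fk k\<close> by (auto simp: Bk_def NfS Fk_def)
  qed
  have IB: "Ik k \<subseteq> Bk k" for k
  proof
    fix x assume "x \<in> Ik k"
    have "Nf k + card (G (Nf k)) \<le> Max (insert (Nf k + card (G (Nf k))) (G (Nf k)))"
      using G(1) by auto
    then show "x \<in> Bk k" using \<open>x \<in> Ik k\<close> by (auto simp: Bk_def NfS Ik_def Fk_def)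
  qed
  have mono: "strict_mono Nf"
  proof (rule strict_monoI_Suc)
    fix k
    have "Nf k + card (G (Nf k)) \<le> Max (insert (Nf k + card (G (Nf k))) (G (Nf k)))"
      using G(1) by auto
    then show "Nf k < Nf (Suc k)" by (simp add: NfS)
  qed
  have uniq: "k = k'" if "n \<in> Bk k" "n \<in> Bk k'" for n k k'
  proof (rule ccontr)
    assume "k \<noteq> k'"
    then consider "Suc k \<le> k'" | "Suc k' \<le> k" by linarith
    then show False
    proof cases
      case 1 then have "Nf (Suc k) \<le> Nf k'" using mono by (simp add: strict_mono_less_eq)
      then show False using that by (auto simp: Bk_def)
    next
      case 2 then have "Nf (Suc k') \<le> Nf k" using mono by (simp add: strict_mono_less_eq)
      then show False using that by (auto simp: Bk_def)
    qed
  qed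
  define blk where "blk n = (LEAST k. n < Nf (Suc k))" for n
  have inblk: "n \<in> Bk (blk n)" for n
  proof -
    have ex: "n < Nf (Suc n)" using strict_mono_imp_increasing[OF mono, of "Suc n"] by simp
    have 1: "n < Nf (Suc (blk n))" unfolding blk_def by (rule LeastI[of _ n]) (rule ex)
    have 2: "Nf (blk n) \<le> n"
    proof (cases "blk n")
      case 0 then show ?thesis by (simp add: Nf0)
    next
      case (Suc j)
      then have "j < blk n" by simp
      then have "\<not> n < Nf (Suc j)" unfolding blk_def by (rule not_less_Least)
      then show ?thesis using Suc by simp
    qed
    show ?thesis using 1 2 by (simp add: Bk_def)
  qed
  have blk_eq: "n \<in> Bk k \<Longrightarrow> blk n = k" for n k using uniq inblk by blast
  have cardeq: "card (Ik k) = card (Fk k)" for k by (simp add: Ik_def)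
  have "\<forall>k. \<exists>\<sigma>. (\<forall>x. \<sigma> (\<sigma> x) = x) \<and> \<sigma> ` Ik k = Fk k \<and> (\<forall>x. x \<notin> Ik k \<union> Fk k \<longrightarrow> \<sigma> x = x)"
  proof
    fix k show "\<exists>\<sigma>. (\<forall>x. \<sigma> (\<sigma> x) = x) \<and> \<sigma> ` Ik k = Fk k \<and> (\<forall>x. x \<notin> Ik k \<union> Fk k \<longrightarrow> \<sigma> x = x)"
      by (rule swap_inv) (use cardeq G(1) in \<open>auto simp: Ik_def Fk_def\<close>)
  qed
  then obtain \<sigma> where \<sigma>: "\<And>k x. \<sigma> k (\<sigma> k x) = x" "\<And>k. \<sigma> k ` Ik k = Fk k"
     "\<And>k x. x \<notin> Ik k \<union> Fk k \<Longrightarrow> \<sigma> k x = x"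
    by metis
  have \<sigma>B: "x \<in> Bk k \<Longrightarrow> \<sigma> k x \<in> Bk k" for k x
  proof (cases "x \<in> Ik k \<union> Fk k")
    case True
    then have "\<sigma> k x \<in> Ik k \<union> Fk k"
      using \<sigma>(2)[of k] by (metis UnE UnI2 \<sigma>(1) \<sigma>(3) image_eqI)
    then show ?thesis using FB IB by blast
  qed (use \<sigma>(3) in auto)
  define p where "p n = \<sigma> (blk n) n" for n
  have pp: "p (p n) = n" for n
  proof -
    have "p n \<in> Bk (blk n)" unfolding p_def using \<sigma>B inblk by blast
    then have "blk (p n) = blk n" by (rule blk_eq)
    then show ?thesis unfolding p_def by (metis \<sigma>(1) p_def)
  qed
  have "bij p" by (rule involuntory_imp_bij) (rule pp)
  then have "summable (\<lambda>n. f (p n))" by (rule P)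
  then obtain N0 where N0: "\<And>m n. m \<ge> N0 \<Longrightarrow> norm (\<Sum>i=m..<n. f (p i)) < e"
    using \<open>e > 0\<close> unfolding summable_Cauchy by blast
  define k where "k = N0"
  have "N0 \<le> Nf k" unfolding k_def using mono strict_mono_imp_increasing by blast
  have inj: "inj p" using \<open>bij p\<close> bij_is_inj by blast
  have img: "p ` Ik k = Fk k"
  proof -
    have "p ` Ik k = \<sigma> k ` Ik k"
      using IB blk_eq unfolding p_def by (intro image_cong) auto
    then show ?thesis using \<sigma>(2) by simp
  qed
  have "(\<Sum>i=Nf k..<Nf k + card (Fk k). f (p i)) = sum f (Fk k)"
    using sum.reindex[of p "Ik k" f] inj img by (simp add: Ik_def inj_on_subset)
  then have "norm (\<Sum>i=Nf k..<Nf k + card (Fk k). f (p i)) \<ge> e"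
    using G(3) by (simp add: Fk_def)
  with N0[OF \<open>N0 \<le> Nf k\<close>, of "Nf k + card (Fk k)"] show False by linarith
qed

theorem proposition2p5:
  fixes e :: "nat \<Rightarrow> 'a::banach" and \<epsilon> :: "nat \<Rightarrow> real"
  assumes "schauder_basis e" and "normalized_basis e"
    and "\<And>n. \<epsilon> n \<ge> 0"
  shows "(unconditional_basis e \<longrightarrow> solid_brick e \<epsilon>) \<and> (summable \<epsilon> \<longrightarrow> solid_brick e \<epsilon>)"
proof (intro conjI impI)
  assume U: "unconditional_basis e"
  show "solid_brick e \<epsilon>" unfolding solid_brick_def
  proof (intro ballI allI impI)
    fix x a assume "x \<in> brick e \<epsilon>" and a: "\<forall>n. \<bar>a n\<bar> \<le> \<bar>coord e n x\<bar>"
    define f where "f n = coord e n x *\<^sub>R e n" for n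
    define t where "t n = a n / coord e n x" for n
    have "summable (\<lambda>n. t n *\<^sub>R f n)"
    proof (rule bounded_mult_summable)
      fix r :: real assume "r > 0"
      show "\<exists>N. \<forall>F. finite F \<and> F \<subseteq> {N..} \<longrightarrow> norm (sum f F) < r"
        by (rule perm_cauchy[OF _ \<open>r > 0\<close>]) (use U in \<open>auto simp: unconditional_basis_def f_def\<close>)
    next
      show "\<forall>n. \<bar>t n\<bar> \<le> 1" using a by (auto simp: t_def abs_divide divide_le_eq_1)
    qed
    moreover have "t n *\<^sub>R f n = a n *\<^sub>R e n" for n
      using a[rule_format, of n] by (cases "coord e n x = 0") (auto simp: t_def f_def)
    ultimately show "summable (\<lambda>n. a n *\<^sub>R e n)" by simp
  qed
next
  assume S: "summable \<epsilon>"
  show "solid_brick e \<epsilon>" unfolding solid_brick_def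
  proof (intro ballI allI impI)
    fix x a assume "x \<in> brick e \<epsilon>" and a: "\<forall>n. \<bar>a n\<bar> \<le> \<bar>coord e n x\<bar>"
    have "norm (a n *\<^sub>R e n) \<le> \<epsilon> n" for n
      using a[rule_format, of n] \<open>x \<in> brick e \<epsilon>\<close> assms(2)
      by (auto simp: brick_def normalized_basis_def intro: order_trans)
    then have "\<exists>N. \<forall>n\<ge>N. norm (a n *\<^sub>R e n) \<le> \<epsilon> n" by blast
    then show "summable (\<lambda>n. a n *\<^sub>R e n)"
      by (rule summable_comparison_test[OF _ S])
  qed
qed

end
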